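(* $Cond_{AB}$ is not universal: there is an epistemic space $\mathbb{S}$ that is identifiable in the limit but is not identifiable in the limit by $Cond_{AB}$.
   Context: An epistemic space is a pair $\mathbb{S}=(S,\mathcal{O})$ where $S$ is a non-empty, at most countable set of worlds and $\mathcal{O}\subseteq\mathcal{P}(S)$ is a set of observables. A data stream is an infinite sequence $\vec O=(O_0,O_1,\ldots)$ of elements of $\mathcal{O}$; $\vec O[n]=(O_0,\ldots,O_{n-1})$; it is sound for $s$ if $s\in O_n$ for all $n$ and complete for $s$ if every $O\in\mathcal{O}$ with $s\in O$ occurs in it. $\mathbb{S}$ is identifiable in the limit if some learner (map from finite sequences to subsets of $S$) outputs $\{s\}$ on all sufficiently long initial segments of every stream sound and complete for $s$, for every $s\in S$. A plausibility space is $\mathbb{B}=(S,\mathcal{O},\preceq)$, $\preceq$ a total preorder on $S$; $\min_\preceq X$ is the set of $\preceq$-minimal elements of $X$. Conditioning: $Cond_1(\mathbb{B},p)=(S\cap p,\mathcal{O},\preceq\cap((S\cap p)\times(S\cap p)))$. Anchored conditioning: if $Cond_1(\mathbb{B},p)=(S',\mathcal{O},\preceq')$, then $Cond^+_1(\mathbb{B},p)=(S',\mathcal{O},\preceq')$ if $|\min_{\preceq'}S'|=1$, and otherwise $Cond^+_1(\mathbb{B},p)=(\{x\},\mathcal{O},\emptyset)$ for some (randomly chosen) $x\in\min_{\preceq'}S'$. The anchoring-biased method: $Cond_{AB}(\mathbb{B},\lambda)=\mathbb{B}$ and $Cond_{AB}(\mathbb{B},\sigma\cdot p)=Cond^+_1(Cond_{AB}(\mathbb{B},\sigma),\min_{\preceq_{AB}}(S_{AB}\cap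 p))$, where $Cond_{AB}(\mathbb{B},\sigma)=(S_{AB},\mathcal{O},\preceq_{AB})$. Its conjecture on $\sigma$ is the set of minimal worlds of $Cond_{AB}((S,\mathcal{O},\preceq),\sigma)$ (for a one-world space $\{x\}$ this is $\{x\}$). $\mathbb{S}$ is identifiable in the limit by $Cond_{AB}$ if there is a total preorder $\preceq$ on $S$ such that for every $s\in S$, every stream sound and complete for $s$, and every resolution of the random choices, the conjecture on $\vec O[n]$ is $\{s\}$ for all sufficiently large $n$. *)

theory Defs
  imports Main "HOL-Library.Countable_Set"
begin

text \<open>Worlds are natural numbers (any non-empty, at most countable set of worlds
  is isomorphic to a subset of nat). Observables are sets of worlds.\<close>

definition epistemic_space :: "nat set \<Rightarrow> nat set set \<Rightarrow> bool" where
  "epistemic_space S Obs \<longleftrightarrow> S \<noteq> {} \<and> countable S \<and> Obs \<subseteq> Pow S"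

definition data_stream :: "nat set set \<Rightarrow> (nat \<Rightarrow> nat set) \<Rightarrow> bool" where
  "data_stream Obs f \<longleftrightarrow> (\<forall>n. f n \<in> Obs)"

definition sound_for :: "(nat \<Rightarrow> nat set) \<Rightarrow> nat \<Rightarrow> bool" where
  "sound_for f s \<longleftrightarrow> (\<forall>n. s \<in> f n)"

definition complete_for :: "nat set set \<Rightarrow> (nat \<Rightarrow> nat set) \<Rightarrow> nat \<Rightarrow> bool" where
  "complete_for Obs f s \<longleftrightarrow> (\<forall>Q\<in>Obs. s \<in> Q \<longrightarrow> (\<exists>n. f n = Q))"

definition prefix_of :: "(nat \<Rightarrow> nat set) \<Rightarrow> nat \<Rightarrow> nat set list" where
  "prefix_of f n = map f [0..<n]"

definition identifiable :: "nat set \<Rightarrow> nat set set \<Rightarrow> bool" where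
  "identifiable S Obs \<longleftrightarrow>
     (\<exists>L :: nat set list \<Rightarrow> nat set. \<forall>s\<in>S. \<forall>f.
        data_stream Obs f \<and> sound_for f s \<and> complete_for Obs f s \<longrightarrow>
        (\<exists>N. \<forall>n\<ge>N. L (prefix_of f n) = {s}))"

text \<open>Total preorder on S (relation \<open>(x,y) \<in> R\<close> means \<open>x \<preceq> y\<close>).\<close>
definition total_preorder_on :: "nat set \<Rightarrow> (nat \<times> nat) set \<Rightarrow> bool" where
  "total_preorder_on S R \<longleftrightarrow> R \<subseteq> S \<times> S \<and> refl_on S R \<and> trans R \<and> total_on S R"

definition minR :: "(nat \<times> nat) set \<Rightarrow> nat set \<Rightarrow> nat set" where
  "minR R X = {x\<in>X. \<forall>y\<in>X. (y, x) \<in> R \<longrightarrow> (x, y) \<in> R}"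

text \<open>Plausibility states (S, \<preceq>); the observable set is never changed, so it is omitted.\<close>
type_synonym pstate = "nat set \<times> (nat \<times> nat) set"

definition cond1 :: "pstate \<Rightarrow> nat set \<Rightarrow> pstate" where
  "cond1 B p = (fst B \<inter> p, snd B \<inter> ((fst B \<inter> p) \<times> (fst B \<inter> p)))"

text \<open>Anchored conditioning; the random choice is resolved by the function c,
  which receives the set of minimal worlds. If that set is empty (no choice possible),
  the conditioned (empty) space is kept.\<close>
definition cond_plus :: "(nat set \<Rightarrow> nat) \<Rightarrow> pstate \<Rightarrow> nat set \<Rightarrow> pstate" where
  "cond_plus c B p =
     (let B' = cond1 B p; M = minR (snd B') (fst B')
      in if card M = 1 \<or> M = {} then B' else ({c M}, {}))"

text \<open>Anchoring-biased method, defined on the reversed sequence. The resolution of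
  the random choices is a function ch taking the history so far and the set of candidates.\<close>
fun condAB_rev :: "(nat set list \<Rightarrow> nat set \<Rightarrow> nat) \<Rightarrow> pstate \<Rightarrow> nat set list \<Rightarrow> pstate" where
  "condAB_rev ch B [] = B"
| "condAB_rev ch B (p # rs) =
     (let St = condAB_rev ch B rs
      in cond_plus (ch (rev rs)) St (minR (snd St) (fst St \<inter> p)))"

definition condAB :: "(nat set list \<Rightarrow> nat set \<Rightarrow> nat) \<Rightarrow> pstate \<Rightarrow> nat set list \<Rightarrow> pstate" where
  "condAB ch B \<sigma> = condAB_rev ch B (rev \<sigma>)"

definition conjAB :: "(nat set list \<Rightarrow> nat set \<Rightarrow> nat) \<Rightarrow> pstate \<Rightarrow> nat set list \<Rightarrow> nat set" where
  "conjAB ch B \<sigma> = (let St = condAB ch B \<sigma> in minR (snd St) (fst St))"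

definition valid_choice :: "(nat set list \<Rightarrow> nat set \<Rightarrow> nat) \<Rightarrow> bool" where
  "valid_choice ch \<longleftrightarrow> (\<forall>\<sigma> M. M \<noteq> {} \<longrightarrow> ch \<sigma> M \<in> M)"

definition identifiable_AB :: "nat set \<Rightarrow> nat set set \<Rightarrow> bool" where
  "identifiable_AB S Obs \<longleftrightarrow>
     (\<exists>R. total_preorder_on S R \<and>
        (\<forall>s\<in>S. \<forall>f. data_stream Obs f \<and> sound_for f s \<and> complete_for Obs f s \<longrightarrow>
           (\<forall>ch. valid_choice ch \<longrightarrow>
              (\<exists>N. \<forall>n\<ge>N. conjAB ch (S, R) (prefix_of f n) = {s}))))"

end

theory Submission
  imports Defs
begin

lemma step_sub:
  assumes "valid_choice ch"
  shows "fst (condAB_rev ch B (p # rs)) \<subseteq> fst (condAB_rev ch B rs)"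
proof -
  let ?St = "condAB_rev ch B rs"
  let ?q = "minR (snd ?St) (fst ?St \<inter> p)"
  let ?B' = "cond1 ?St ?q"
  let ?M = "minR (snd ?B') (fst ?B')"
  have B': "fst ?B' \<subseteq> fst ?St" by (simp add: cond1_def)
  have M: "?M \<subseteq> fst ?B'" by (auto simp: minR_def)
  show ?thesis
  proof (cases "card ?M = 1 \<or> ?M = {}")
    case True
    then show ?thesis using B' by (simp add: cond_plus_def Let_def)
  next
    case False
    then have "ch (rev rs) ?M \<in> ?M" using assms by (auto simp: valid_choice_def)
    then show ?thesis using False B' M by (auto simp: cond_plus_def Let_def)
  qed
qed

lemma app_sub:
  assumes "valid_choice ch"
  shows "fst (condAB_rev ch B (xs @ ys)) \<subseteq> fst (condAB_rev ch B ys)"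
proof (induction xs)
  case Nil then show ?case by simp
next
  case (Cons a xs)
  then show ?case using step_sub[OF assms, of B a "xs @ ys"] by auto
qed

lemma conj_sub:
  assumes "valid_choice ch"
  shows "conjAB ch B (prefix_of f (Suc n)) \<subseteq> fst (condAB_rev ch B [f 0])"
proof -
  have "prefix_of f (Suc n) = f 0 # map f [1..<Suc n]"
    by (simp add: prefix_of_def upt_conv_Cons del: upt_Suc)
  then have rv: "rev (prefix_of f (Suc n)) = rev (map f [1..<Suc n]) @ [f 0]" by simp
  have "fst (condAB ch B (prefix_of f (Suc n))) \<subseteq> fst (condAB_rev ch B [f 0])"
    unfolding condAB_def rv by (rule app_sub[OF assms])
  moreover have "conjAB ch B (prefix_of f (Suc n)) \<subseteq> fst (condAB ch B (prefix_of f (Suc n)))"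
    by (auto simp: conjAB_def Let_def minR_def)
  ultimately show ?thesis by blast
qed

lemma first_small:
  assumes "x \<in> fst (condAB_rev ch B [p])" "y \<in> fst (condAB_rev ch B [p])"
  shows "x = y"
proof -
  let ?St = "B"
  let ?q = "minR (snd ?St) (fst ?St \<inter> p)"
  let ?B' = "cond1 ?St ?q"
  let ?M = "minR (snd ?B') (fst ?B')"
  have eq: "condAB_rev ch B [p] = cond_plus (ch []) B ?q" by simp
  have qM: "fst ?B' \<subseteq> ?M"
    by (auto simp: cond1_def minR_def)
  show ?thesis
  proof (cases "card ?M = 1 \<or> ?M = {}")
    case True
    then have "fst (condAB_rev ch B [p]) = fst ?B'" by (simp add: cond_plus_def Let_def)
    then have "x \<in> ?M" "y \<in> ?M" using assms qM by auto
    then show ?thesis using True by (metis card_1_singletonE empty_iff singletonD)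
  next
    case False
    then have "fst (condAB_rev ch B [p]) = {ch [] ?M}" by (simp add: cond_plus_def Let_def)
    then show ?thesis using assms by auto
  qed
qed

theorem mainTheorem6:
  shows "\<exists>S Obs. epistemic_space S Obs \<and> identifiable S Obs \<and> \<not> identifiable_AB S Obs"
proof (intro exI conjI)
  let ?S = "{0,1::nat}"
  let ?Obs = "{{0,1::nat},{1}}"
  show "epistemic_space ?S ?Obs" by (auto simp: epistemic_space_def)
  show "identifiable ?S ?Obs"
    unfolding identifiable_def
  proof (intro exI[of _ "\<lambda>\<sigma>. if {1} \<in> set \<sigma> then {1} else {0}"] ballI allI impI)
    fix s f
    assume s: "s \<in> ?S" and h: "data_stream ?Obs f \<and> sound_for f s \<and> complete_for ?Obs f s"
    show "\<exists>N. \<forall>n\<ge>N. (if {1} \<in> set (prefix_of f n) then {1} else {0}) = {s}"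
    proof (cases "s = 0")
      case True
      have "\<forall>n. f n = {0,1}"
      proof
        fix n
        have "f n \<in> ?Obs" "0 \<in> f n" using h True by (auto simp: data_stream_def sound_for_def)
        then show "f n = {0,1}" by (metis empty_iff insert_iff zero_neq_one)
      qed
      then show ?thesis using True by (auto simp: prefix_of_def)
    next
      case False
      then have s1: "s = 1" using s by auto
      then obtain k where k: "f k = {1}" using h by (auto simp: complete_for_def)
      have "\<forall>n\<ge>Suc k. {1} \<in> set (prefix_of f n)"
      proof (intro allI impI)
        fix n assume "Suc k \<le> n"
        then have "k \<in> set [0..<n]" by simp
        then have "f k \<in> set (map f [0..<n])" unfolding set_map by (rule imageI)
        then show "{1} \<in> set (prefix_of f n)" using k by (simp add: prefix_of_def)
      qed
      then show ?thesis using s1 by auto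
    qed
  qed
  show "\<not> identifiable_AB ?S ?Obs"
  proof
    assume "identifiable_AB ?S ?Obs"
    then obtain R where R: "\<forall>s\<in>?S. \<forall>f. data_stream ?Obs f \<and> sound_for f s \<and> complete_for ?Obs f s \<longrightarrow>
           (\<forall>ch. valid_choice ch \<longrightarrow>
              (\<exists>N. \<forall>n\<ge>N. conjAB ch (?S, R) (prefix_of f n) = {s}))"
      unfolding identifiable_AB_def by blast
    define ch :: "nat set list \<Rightarrow> nat set \<Rightarrow> nat" where "ch = (\<lambda>\<sigma> M. SOME x. x \<in> M)"
    have vc: "valid_choice ch" unfolding valid_choice_def ch_def by (auto intro: someI_ex)
    define f0 :: "nat \<Rightarrow> nat set" where "f0 = (\<lambda>n. {0,1})"
    define f1 :: "nat \<Rightarrow> nat set" where "f1 = (\<lambda>n. if n = 0 then {0,1} else {1})"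
    have "data_stream ?Obs f0 \<and> sound_for f0 0 \<and> complete_for ?Obs f0 0"
      by (auto simp: f0_def data_stream_def sound_for_def complete_for_def)
    then obtain N0 where N0: "\<forall>n\<ge>N0. conjAB ch (?S, R) (prefix_of f0 n) = {0}"
      using R vc by blast
    have "data_stream ?Obs f1 \<and> sound_for f1 1 \<and> complete_for ?Obs f1 1"
      unfolding f1_def data_stream_def sound_for_def complete_for_def
      by (auto intro: exI[of _ 0] exI[of _ 1])
    then obtain N1 where N1: "\<forall>n\<ge>N1. conjAB ch (?S, R) (prefix_of f1 n) = {1}"
      using R vc by blast
    let ?n = "N0 + N1"
    have "{0} \<subseteq> fst (condAB_rev ch (?S, R) [f0 0])"
      using N0 conj_sub[OF vc, of "(?S,R)" f0 ?n] by (metis le_add1 le_SucI)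
    moreover have "{1} \<subseteq> fst (condAB_rev ch (?S, R) [f1 0])"
      using N1 conj_sub[OF vc, of "(?S,R)" f1 ?n] by (metis le_add2 le_SucI)
    moreover have "f0 0 = f1 0" by (simp add: f0_def f1_def)
    ultimately show False using first_small[of 0 ch "(?S,R)" "f0 0" 1] by auto
  qed
qed

end
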